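(* The automorphic growth of the Heisenberg group $H(\mathbb{Z})=\langle a,b,c\mid c=[a,b],\ c\text{ is central}\rangle$ is quadratic, i.e. $\alpha_{H(\mathbb{Z})}\sim(n\mapsto n^2)$.
   Context: For a finitely generated group $G$ with finite generating set $\Sigma$, the automorphic growth function sends $n$ to the number of $\operatorname{Aut}(G)$-orbits of $G$ containing an element of word length at most $n$ with respect to $\Sigma$. For non-decreasing non-zero $f,g\colon\mathbb{N}\to\mathbb{N}$ write $f\preccurlyeq g$ if there is $\lambda\in\mathbb{N}\setminus\{0\}$ with $f(n)\le\lambda g(\lambda n+\lambda)+\lambda$ for all $n$, and $f\sim g$ if both hold in each direction; $\alpha_G$ is the $\sim$-class of the automorphic growth function, which is independent of $\Sigma$. *)

theory Defs
  imports "HOL-Algebra.Group"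
begin

text \<open>The integer Heisenberg group H(Z), realised as upper unitriangular
  integer 3x3 matrices [[1,x,z],[0,1,y],[0,0,1]] encoded as triples (x,y,z).\<close>

definition heis :: "(int \<times> int \<times> int) monoid" where
  "heis = \<lparr> carrier = UNIV,
            mult = (\<lambda>(x, y, z) (x', y', z'). (x + x', y + y', z + z' + x * y')),
            one = (0, 0, 0) \<rparr>"

definition heis_a :: "int \<times> int \<times> int" where "heis_a = (1, 0, 0)"
definition heis_b :: "int \<times> int \<times> int" where "heis_b = (0, 1, 0)"

definition heis_c :: "int \<times> int \<times> int" where
  "heis_c = inv\<^bsub>heis\<^esub> heis_a \<otimes>\<^bsub>heis\<^esub> inv\<^bsub>heis\<^esub> heis_b
            \<otimes>\<^bsub>heis\<^esub> heis_a \<otimes>\<^bsub>heis\<^esub> heis_b"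

primrec word_ball :: "('a, 'b) monoid_scheme \<Rightarrow> 'a set \<Rightarrow> nat \<Rightarrow> 'a set" where
  "word_ball G S 0 = {\<one>\<^bsub>G\<^esub>}"
| "word_ball G S (Suc n) = word_ball G S n \<union>
     {g \<otimes>\<^bsub>G\<^esub> s | g s. g \<in> word_ball G S n \<and> (s \<in> S \<or> s \<in> m_inv G ` S)}"

definition aut_orbit :: "('a, 'b) monoid_scheme \<Rightarrow> 'a \<Rightarrow> 'a set" where
  "aut_orbit G g = {\<phi> g | \<phi>. \<phi> \<in> iso G G}"

definition aut_growth :: "('a, 'b) monoid_scheme \<Rightarrow> 'a set \<Rightarrow> nat \<Rightarrow> nat" where
  "aut_growth G S n = card (aut_orbit G ` word_ball G S n)"

definition growth_le :: "(nat \<Rightarrow> nat) \<Rightarrow> (nat \<Rightarrow> nat) \<Rightarrow> bool" where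
  "growth_le f g \<longleftrightarrow> (\<exists>L::nat. L \<noteq> 0 \<and> (\<forall>n. f n \<le> L * g (L * n + L) + L))"

definition growth_equiv :: "(nat \<Rightarrow> nat) \<Rightarrow> (nat \<Rightarrow> nat) \<Rightarrow> bool" where
  "growth_equiv f g \<longleftrightarrow> growth_le f g \<and> growth_le g f"

end

theory Submission
  imports Defs
begin

lemma heis_mult [simp]:
  "(x, y, z) \<otimes>\<^bsub>heis\<^esub> (x', y', z') = (x + x', y + y', z + z' + x * y')"
  by (simp add: heis_def)

lemma heis_one [simp]: "\<one>\<^bsub>heis\<^esub> = (0, 0, 0)"
  by (simp add: heis_def)

lemma heis_carrier [simp]: "carrier heis = UNIV"
  by (simp add: heis_def)

lemma heis_group: "group heis"
proof (rule groupI)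
  fix x y z :: "int \<times> int \<times> int"
  show "x \<otimes>\<^bsub>heis\<^esub> y \<otimes>\<^bsub>heis\<^esub> z = x \<otimes>\<^bsub>heis\<^esub> (y \<otimes>\<^bsub>heis\<^esub> z)"
    by (cases x; cases y; cases z) (simp add: algebra_simps)
  show "\<one>\<^bsub>heis\<^esub> \<otimes>\<^bsub>heis\<^esub> x = x" by (cases x) simp
  show "\<exists>y\<in>carrier heis. y \<otimes>\<^bsub>heis\<^esub> x = \<one>\<^bsub>heis\<^esub>"
  proof (cases x)
    case (fields a b c)
    show ?thesis by (rule bexI[of _ "(-a, -b, a*b - c)"]) (simp_all add: fields)
  qed
qed auto

lemma heis_inv [simp]: "inv\<^bsub>heis\<^esub> (x, y, z) = (-x, -y, x*y - z)"
  by (rule group.inv_equality[OF heis_group]) auto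

lemma heis_c_eq: "heis_c = (0, 0, 1)"
  by (simp add: heis_c_def heis_a_def heis_b_def)

definition gens :: "(int \<times> int \<times> int) set" where
  "gens = {(1,0,0),(0,1,0),(0,0,1),(-1,0,0),(0,-1,0),(0,0,-1)}"

lemma gens_eq: "(s \<in> {heis_a, heis_b, heis_c} \<or> s \<in> m_inv heis ` {heis_a, heis_b, heis_c}) \<longleftrightarrow> s \<in> gens"
  by (auto simp: heis_c_eq heis_a_def heis_b_def gens_def)

lemma ball_Suc: "word_ball heis {heis_a, heis_b, heis_c} (Suc n) =
   word_ball heis {heis_a, heis_b, heis_c} n \<union> {g \<otimes>\<^bsub>heis\<^esub> s | g s. g \<in> word_ball heis {heis_a, heis_b, heis_c} n \<and> s \<in> gens}"
  using gens_eq by simp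

abbreviation B where "B \<equiv> word_ball heis {heis_a, heis_b, heis_c}"

lemma ball_bound: "(x, y, z) \<in> B n \<Longrightarrow> \<bar>x\<bar> + \<bar>y\<bar> \<le> int n \<and> \<bar>z\<bar> \<le> int n ^ 2"
proof (induction n arbitrary: x y z)
  case 0
  then show ?case by simp
next
  case (Suc n)
  show ?case
  proof (cases "(x, y, z) \<in> B n")
    case True
    from Suc.IH[OF True] show ?thesis by (simp add: power2_eq_square) (smt (verit) mult_mono of_nat_0_le_iff)
  next
    case False
    with Suc.prems obtain g s where gs: "(x,y,z) = g \<otimes>\<^bsub>heis\<^esub> s" "g \<in> B n" "s \<in> gens"
      unfolding ball_Suc by blast
    obtain x0 y0 z0 where g: "g = (x0, y0, z0)" by (cases g)
    from Suc.IH[OF gs(2)[unfolded g]] have ih: "\<bar>x0\<bar> + \<bar>y0\<bar> \<le> int n" "\<bar>z0\<bar> \<le> int n ^ 2" by auto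
    have "\<bar>x0\<bar> \<le> int n" using ih by simp
    then have "\<bar>z0\<bar> + \<bar>x0\<bar> \<le> (int n + 1)^2" using ih(2) by (simp add: power2_eq_square algebra_simps)
    then show ?thesis using gs(1,3) ih unfolding g gens_def
      by (auto simp: power2_eq_square algebra_simps)
  qed
qed

lemma ball_box: "B n \<subseteq> {-int n..int n} \<times> {-int n..int n} \<times> {-(int n^2)..int n^2}"
proof
  fix g assume "g \<in> B n"
  then show "g \<in> {-int n..int n} \<times> {-int n..int n} \<times> {-(int n^2)..int n^2}"
    using ball_bound[of "fst g" "fst (snd g)" "snd (snd g)" n]
    by (cases g) (auto simp: abs_le_iff)
qed

lemma ball_finite: "finite (B n)"
  by (rule finite_subset[OF ball_box]) auto


lemma orbit_iso:
  assumes "\<phi> \<in> iso heis heis"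
  shows "aut_orbit heis (\<phi> g) = aut_orbit heis g"
proof
  show "aut_orbit heis (\<phi> g) \<subseteq> aut_orbit heis g"
  proof
    fix h assume "h \<in> aut_orbit heis (\<phi> g)"
    then obtain \<psi> where "\<psi> \<in> iso heis heis" "h = \<psi> (\<phi> g)" unfolding aut_orbit_def by blast
    then have "\<psi> \<circ> \<phi> \<in> iso heis heis" "h = (\<psi> \<circ> \<phi>) g" using iso_set_trans assms by auto
    then show "h \<in> aut_orbit heis g" unfolding aut_orbit_def by blast
  qed
next
  show "aut_orbit heis g \<subseteq> aut_orbit heis (\<phi> g)"
  proof
    fix h assume "h \<in> aut_orbit heis g"
    then obtain \<psi> where psi: "\<psi> \<in> iso heis heis" "h = \<psi> g" unfolding aut_orbit_def by blast
    have inv: "inv_into (carrier heis) \<phi> \<in> iso heis heis"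
      using group.iso_set_sym[OF heis_group assms] .
    have "inj \<phi>" using assms by (auto simp: iso_def bij_betw_def)
    then have "inv_into (carrier heis) \<phi> (\<phi> g) = g" by simp
    then have "h = (\<psi> \<circ> inv_into (carrier heis) \<phi>) (\<phi> g)" using psi by simp
    moreover have "\<psi> \<circ> inv_into (carrier heis) \<phi> \<in> iso heis heis" using iso_set_trans inv psi by blast
    ultimately show "h \<in> aut_orbit heis (\<phi> g)" unfolding aut_orbit_def by blast
  qed
qed

lemma iso_heisI:
  assumes "\<And>g h. f (g \<otimes>\<^bsub>heis\<^esub> h) = f g \<otimes>\<^bsub>heis\<^esub> f h"
    and "\<And>g. f' (f g) = g" and "\<And>g. f (f' g) = g"
  shows "f \<in> iso heis heis"
  unfolding iso_def hom_def using assms by (auto intro!: bij_betwI[of f _ _ f'])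

definition tri :: "int \<Rightarrow> int" where "tri y = y * (y - 1) div 2"

lemma tri2: "2 * tri y = y * (y - 1)"
proof -
  have "even (y * (y - 1))" by auto
  then show ?thesis unfolding tri_def by simp
qed

lemma tri_add: "tri (a + b) = tri a + tri b + a * b"
proof -
  have "2 * tri (a + b) = 2 * (tri a + tri b + a * b)"
    unfolding distrib_left tri2 by (simp add: algebra_simps)
  then show ?thesis by simp
qed

definition sw :: "int \<times> int \<times> int \<Rightarrow> int \<times> int \<times> int" where
  "sw = (\<lambda>(x, y, z). (y, x, x * y - z))"

definition sh :: "int \<Rightarrow> int \<times> int \<times> int \<Rightarrow> int \<times> int \<times> int" where
  "sh k = (\<lambda>(x, y, z). (x + k * y, y, z + k * tri y))"

definition cj :: "int \<Rightarrow> int \<times> int \<times> int \<Rightarrow> int \<times> int \<times> int" where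
  "cj v = (\<lambda>(x, y, z). (x, y, z + x * v))"

lemma sw_iso: "sw \<in> iso heis heis"
proof (rule iso_heisI[where f' = sw])
  fix g h :: "int \<times> int \<times> int"
  show "sw (g \<otimes>\<^bsub>heis\<^esub> h) = sw g \<otimes>\<^bsub>heis\<^esub> sw h"
    by (cases g; cases h) (simp add: sw_def algebra_simps)
  show "sw (sw g) = g" by (cases g) (simp add: sw_def)
  show "sw (sw g) = g" by (cases g) (simp add: sw_def)
qed

lemma sh_iso: "sh k \<in> iso heis heis"
proof (rule iso_heisI[where f' = "sh (-k)"])
  fix g h :: "int \<times> int \<times> int"
  show "sh k (g \<otimes>\<^bsub>heis\<^esub> h) = sh k g \<otimes>\<^bsub>heis\<^esub> sh k h"
    by (cases g; cases h) (simp add: sh_def tri_add algebra_simps)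
  show "sh (-k) (sh k g) = g" by (cases g) (simp add: sh_def)
  show "sh k (sh (-k) g) = g" by (cases g) (simp add: sh_def)
qed

lemma cj_iso: "cj v \<in> iso heis heis"
proof (rule iso_heisI[where f' = "cj (-v)"])
  fix g h :: "int \<times> int \<times> int"
  show "cj v (g \<otimes>\<^bsub>heis\<^esub> h) = cj v g \<otimes>\<^bsub>heis\<^esub> cj v h"
    by (cases g; cases h) (simp add: cj_def algebra_simps)
  show "cj (-v) (cj v g) = g" by (cases g) (simp add: cj_def)
  show "cj v (cj (-v) g) = g" by (cases g) (simp add: cj_def)
qed

lemma reduce_aux:
  "nat \<bar>y\<bar> = m \<Longrightarrow> (x, y) \<noteq> (0, 0) \<Longrightarrow>
   \<exists>e z'. e \<noteq> 0 \<and> \<bar>e\<bar> \<le> max \<bar>x\<bar> \<bar>y\<bar> \<and> aut_orbit heis (x, y, z) = aut_orbit heis (e, 0, z')"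
proof (induction m arbitrary: x y z rule: less_induct)
  case (less m)
  show ?case
  proof (cases "y = 0")
    case True
    then show ?thesis using less.prems by auto
  next
    case False
    define q where "q = x div y"
    have m: "x + (- q) * y = x mod y" unfolding q_def
      using minus_div_mult_eq_mod[of x y] by simp
    define z1 where "z1 = z + (-q) * tri y"
    have "sh (-q) (x, y, z) = (x mod y, y, z1)" unfolding sh_def z1_def using m by simp
    then have "sw (sh (-q) (x, y, z)) = (y, x mod y, x mod y * y - z1)" by (simp add: sw_def)
    then have o: "aut_orbit heis (x, y, z) = aut_orbit heis (y, x mod y, x mod y * y - z1)"
      using orbit_iso[OF sw_iso, of "sh (-q) (x, y, z)"] orbit_iso[OF sh_iso, of "-q" "(x,y,z)"] by simp
    have lt: "\<bar>x mod y\<bar> < \<bar>y\<bar>" using abs_mod_less False by blast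
    then have "nat \<bar>x mod y\<bar> < m" using less.prems by simp
    from less.IH[OF this refl, of y "x mod y * y - z1"] False
    obtain e z' where "e \<noteq> 0" "\<bar>e\<bar> \<le> max \<bar>y\<bar> \<bar>x mod y\<bar>"
      "aut_orbit heis (y, x mod y, x mod y * y - z1) = aut_orbit heis (e, 0, z')" by auto
    then show ?thesis using o lt by (intro exI[of _ e] exI[of _ z']) auto
  qed
qed

lemma reduce:
  assumes "(x, y) \<noteq> (0, 0)"
  shows "\<exists>e r. e \<noteq> 0 \<and> \<bar>e\<bar> \<le> max \<bar>x\<bar> \<bar>y\<bar> \<and> \<bar>r\<bar> < \<bar>e\<bar> \<and> aut_orbit heis (x, y, z) = aut_orbit heis (e, 0, r)"
proof -
  obtain e z' where e: "e \<noteq> 0" "\<bar>e\<bar> \<le> max \<bar>x\<bar> \<bar>y\<bar>" "aut_orbit heis (x, y, z) = aut_orbit heis (e, 0, z')"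
    using reduce_aux[OF refl assms] by blast
  have "cj (- (z' div e)) (e, 0, z') = (e, 0, z' mod e)"
    using minus_div_mult_eq_mod[of z' e] by (simp add: cj_def algebra_simps)
  then have "aut_orbit heis (e, 0, z') = aut_orbit heis (e, 0, z' mod e)"
    using orbit_iso[OF cj_iso, of "- (z' div e)" "(e, 0, z')"] by simp
  then show ?thesis using e abs_mod_less[OF e(1), of z'] by blast
qed


definition R :: "nat \<Rightarrow> (int \<times> int \<times> int) set" where
  "R n = ({-int n..int n} \<times> {0} \<times> {-int n..int n}) \<union> ({0} \<times> {0} \<times> {-(int n^2)..int n^2})"

lemma orbits_sub: "aut_orbit heis ` B n \<subseteq> aut_orbit heis ` R n"
proof
  fix Ob assume "Ob \<in> aut_orbit heis ` B n"
  then obtain x y z where g: "(x, y, z) \<in> B n" "Ob = aut_orbit heis (x, y, z)" by auto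
  note bd = ball_bound[OF g(1)]
  show "Ob \<in> aut_orbit heis ` R n"
  proof (cases "(x, y) = (0, 0)")
    case True
    then have "(x, y, z) \<in> R n" using bd by (auto simp: R_def abs_le_iff)
    then show ?thesis using g by blast
  next
    case False
    from reduce[OF this, of z] obtain e r where er: "\<bar>e\<bar> \<le> max \<bar>x\<bar> \<bar>y\<bar>" "\<bar>r\<bar> < \<bar>e\<bar>"
      "aut_orbit heis (x, y, z) = aut_orbit heis (e, 0, r)" by blast
    have "\<bar>e\<bar> \<le> int n" "\<bar>r\<bar> \<le> int n" using er bd
      by (smt (verit) abs_ge_zero)+
    then have "(e, 0, r) \<in> R n" by (auto simp: R_def abs_le_iff)
    then show ?thesis using g er by (auto intro: image_eqI[of _ _ "(e,0,r)"])
  qed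
qed

lemma card_R: "card (R n) \<le> (2*n+1)*(2*n+1) + (2*n^2+1)"
proof -
  have "card (R n) \<le> card ({-int n..int n} \<times> {0::int} \<times> {-int n..int n}) + card ({0::int} \<times> {0::int} \<times> {-(int n^2)..int n^2})"
    unfolding R_def by (rule card_Un_le)
  also have "\<dots> = (2*n+1)*(2*n+1) + (2*n^2+1)"
    by (simp add: card_cartesian_product nat_add_distrib nat_mult_distrib nat_power_eq)
  finally show ?thesis .
qed

lemma upper: "aut_growth heis {heis_a, heis_b, heis_c} n \<le> 6 * (6 * n + 6)^2 + 6"
proof -
  have "aut_growth heis {heis_a, heis_b, heis_c} n \<le> card (aut_orbit heis ` R n)"
    unfolding aut_growth_def by (rule card_mono[OF _ orbits_sub]) (simp add: R_def)
  also have "\<dots> \<le> card (R n)" by (rule card_image_le) (simp add: R_def)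
  also have "\<dots> \<le> (2*n+1)*(2*n+1) + (2*n^2+1)" by (rule card_R)
  also have "\<dots> \<le> 6 * (6 * n + 6)^2 + 6" by (simp add: power2_eq_square algebra_simps)
  finally show ?thesis .
qed


lemma hom_center:
  assumes "\<phi> \<in> hom heis heis"
  shows "\<exists>D. \<forall>k::nat. \<phi> (0, 0, int k) = (0, 0, int k * D)"
proof -
  have h: "\<And>g h. \<phi> (g \<otimes>\<^bsub>heis\<^esub> h) = \<phi> g \<otimes>\<^bsub>heis\<^esub> \<phi> h"
    using assms by (auto simp: hom_def)
  obtain p r t where a: "\<phi> (1, 0, 0) = (p, r, t)" by (cases "\<phi> (1, 0, 0)")
  obtain q s u where b: "\<phi> (0, 1, 0) = (q, s, u)" by (cases "\<phi> (0, 1, 0)")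
  obtain w1 w2 w3 where c: "\<phi> (0, 0, 1) = (w1, w2, w3)" by (cases "\<phi> (0, 0, 1)")
  have "\<phi> ((1,0,0) \<otimes>\<^bsub>heis\<^esub> (0,1,0)) = \<phi> (((0,1,0) \<otimes>\<^bsub>heis\<^esub> (1,0,0)) \<otimes>\<^bsub>heis\<^esub> (0,0,1))"
    by simp
  then have "\<phi> (1,0,0) \<otimes>\<^bsub>heis\<^esub> \<phi> (0,1,0) = (\<phi> (0,1,0) \<otimes>\<^bsub>heis\<^esub> \<phi> (1,0,0)) \<otimes>\<^bsub>heis\<^esub> \<phi> (0,0,1)"
    unfolding h .
  then have c': "\<phi> (0, 0, 1) = (0, 0, p * s - q * r)" unfolding a b c by (simp add: algebra_simps)
  obtain o1 o2 o3 where o: "\<phi> (0, 0, 0) = (o1, o2, o3)" by (cases "\<phi> (0, 0, 0)")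
  have "\<phi> ((0,0,0) \<otimes>\<^bsub>heis\<^esub> (0,0,0)) = \<phi> (0,0,0)" by simp
  then have "\<phi> (0,0,0) = (0,0,0)" unfolding h o by auto
  show ?thesis
  proof (intro exI allI)
    fix k :: nat
    show "\<phi> (0, 0, int k) = (0, 0, int k * (p * s - q * r))"
    proof (induction k)
      case 0
      then show ?case using \<open>\<phi> (0,0,0) = (0,0,0)\<close> by simp
    next
      case (Suc k)
      have "\<phi> (0, 0, int (Suc k)) = \<phi> ((0, 0, int k) \<otimes>\<^bsub>heis\<^esub> (0, 0, 1))" by (simp add: add.commute)
      also have "\<dots> = (0, 0, int (Suc k) * (p * s - q * r))" unfolding h Suc c' by (simp add: algebra_simps)
      finally show ?case .
    qed
  qed
qed

lemma orbit_center_inj: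
  assumes "aut_orbit heis (0, 0, int k) = aut_orbit heis (0, 0, int k')"
  shows "k = k'"
proof -
  have mem: "g \<in> aut_orbit heis g" for g
    unfolding aut_orbit_def using iso_set_refl by force
  have "\<exists>D. int k' = int k * D" if "aut_orbit heis (0, 0, int k) = aut_orbit heis (0, 0, int k')" for k k'
  proof -
    from mem[of "(0,0,int k')"] that obtain \<phi> where "\<phi> \<in> iso heis heis" "(0,0,int k') = \<phi> (0,0,int k)"
      unfolding aut_orbit_def by auto
    moreover then obtain D where "\<forall>j::nat. \<phi> (0, 0, int j) = (0, 0, int j * D)"
      using hom_center by (auto simp: iso_def)
    ultimately show ?thesis by auto
  qed
  from this[OF assms] this[OF assms[symmetric]] obtain D D' where
    d: "int k' = int k * D" "int k = int k' * D'" by blast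
  show ?thesis
  proof (cases "k = 0")
    case True then show ?thesis using d by simp
  next
    case False
    have "int k * 1 = int k * (D * D')" using d by (simp add: algebra_simps)
    then have "D * D' = 1" using False by simp
    then have "D = 1 \<or> D = -1" using zmult_eq_1_iff by blast
    then show ?thesis using d False by auto
  qed
qed

lemma ball_mono: "m \<le> m' \<Longrightarrow> B m \<subseteq> B m'"
  by (induction m' rule: dec_induct) auto

lemma ball_step: "g \<in> B m \<Longrightarrow> s \<in> gens \<Longrightarrow> g \<otimes>\<^bsub>heis\<^esub> s \<in> B (Suc m)"
  unfolding ball_Suc by blast

lemma ball_a: "(x, y, z) \<in> B m \<Longrightarrow> (x + int j, y, z) \<in> B (m + j) \<and> (x - int j, y, z) \<in> B (m + j)"
proof (induction j)
  case (Suc j)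
  then have ih: "(x + int j, y, z) \<in> B (m + j)" "(x - int j, y, z) \<in> B (m + j)" by auto
  have "(x + int j, y, z) \<otimes>\<^bsub>heis\<^esub> (1,0,0) \<in> B (Suc (m + j))"
    by (rule ball_step[OF ih(1)]) (simp add: gens_def)
  moreover have "(x - int j, y, z) \<otimes>\<^bsub>heis\<^esub> (-1,0,0) \<in> B (Suc (m + j))"
    by (rule ball_step[OF ih(2)]) (simp add: gens_def)
  ultimately show ?case by (simp add: algebra_simps del: word_ball.simps)
qed simp

lemma ball_b: "(x, y, z) \<in> B m \<Longrightarrow> (x, y + int j, z + x * int j) \<in> B (m + j) \<and> (x, y - int j, z - x * int j) \<in> B (m + j)"
proof (induction j)
  case (Suc j)
  then have ih: "(x, y + int j, z + x * int j) \<in> B (m + j)" "(x, y - int j, z - x * int j) \<in> B (m + j)" by auto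
  have "(x, y + int j, z + x * int j) \<otimes>\<^bsub>heis\<^esub> (0,1,0) \<in> B (Suc (m + j))"
    by (rule ball_step[OF ih(1)]) (simp add: gens_def)
  moreover have "(x, y - int j, z - x * int j) \<otimes>\<^bsub>heis\<^esub> (0,-1,0) \<in> B (Suc (m + j))"
    by (rule ball_step[OF ih(2)]) (simp add: gens_def)
  ultimately show ?case by (simp add: algebra_simps del: word_ball.simps)
qed simp

lemma ball_c: "(x, y, z) \<in> B m \<Longrightarrow> (x, y, z + int j) \<in> B (m + j)"
proof (induction j)
  case (Suc j)
  then have ih: "(x, y, z + int j) \<in> B (m + j)" by auto
  have "(x, y, z + int j) \<otimes>\<^bsub>heis\<^esub> (0,0,1) \<in> B (Suc (m + j))"
    by (rule ball_step[OF ih]) (simp add: gens_def)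
  then show ?case by (simp add: algebra_simps del: word_ball.simps)
qed simp

lemma center_in_ball: "i \<le> M \<Longrightarrow> j \<le> M \<Longrightarrow> r \<le> M \<Longrightarrow> (0, 0, int (i * j + r)) \<in> B (5 * M)"
proof -
  assume le: "i \<le> M" "j \<le> M" "r \<le> M"
  have "(0,0,0) \<in> B 0" by simp
  then have "(int i, 0, 0) \<in> B i" using ball_a[of 0 0 0 0 i] by simp
  then have "(int i, int j, int i * int j) \<in> B (i + j)" using ball_b[of "int i" 0 0 i j] by simp
  then have "(0, int j, int i * int j) \<in> B (i + j + i)" using ball_a[of "int i" "int j" _ "i+j" i] by simp
  then have "(0, 0, int i * int j) \<in> B (i + j + i + j)" using ball_b[of 0 "int j" _ "i+j+i" j] by simp
  then have "(0, 0, int i * int j + int r) \<in> B (i + j + i + j + r)" using ball_c by blast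
  moreover have "B (i + j + i + j + r) \<subseteq> B (5 * M)" using le by (intro ball_mono) simp
  ultimately show ?thesis by auto
qed

lemma lower: "n ^ 2 \<le> 5 * aut_growth heis {heis_a, heis_b, heis_c} (5 * n + 5) + 5"
proof -
  define M where "M = n + 1"
  have sub: "(\<lambda>k. aut_orbit heis (0, 0, int k)) ` {0..n^2} \<subseteq> aut_orbit heis ` B (5 * n + 5)"
  proof
    fix Ob assume "Ob \<in> (\<lambda>k. aut_orbit heis (0, 0, int k)) ` {0..n^2}"
    then obtain k where k: "k \<le> n^2" "Ob = aut_orbit heis (0, 0, int k)" by auto
    have "k < M * M" using k(1) unfolding M_def by (simp add: power2_eq_square)
    then have "k div M < M" by (simp add: less_mult_imp_div_less)
    moreover have "k mod M < M" unfolding M_def by simp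
    ultimately have "(0, 0, int ((k div M) * M + k mod M)) \<in> B (5 * M)"
      by (intro center_in_ball) auto
    then have "(0, 0, int k) \<in> B (5 * M)" by (simp only: div_mult_mod_eq)
    moreover have "5 * M = 5 * n + 5" unfolding M_def by simp
    ultimately have "(0, 0, int k) \<in> B (5 * n + 5)" by simp
    then show "Ob \<in> aut_orbit heis ` B (5 * n + 5)" using k by blast
  qed
  have "n^2 + 1 = card ((\<lambda>k. aut_orbit heis (0, 0, int k)) ` {0..n^2})"
    by (subst card_image) (auto intro!: inj_onI orbit_center_inj)
  also have "\<dots> \<le> aut_growth heis {heis_a, heis_b, heis_c} (5 * n + 5)"
    unfolding aut_growth_def by (rule card_mono[OF _ sub]) (simp add: ball_finite)
  finally show ?thesis by simp
qed

theorem mainTheorem3: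
  shows "growth_equiv (aut_growth heis {heis_a, heis_b, heis_c}) (\<lambda>n. n ^ 2)"
  unfolding growth_equiv_def growth_le_def
proof
  show "\<exists>L::nat. L \<noteq> 0 \<and> (\<forall>n. aut_growth heis {heis_a, heis_b, heis_c} n \<le> L * (L * n + L)^2 + L)"
    by (rule exI[of _ 6]) (simp add: upper)
  show "\<exists>L::nat. L \<noteq> 0 \<and> (\<forall>n. n^2 \<le> L * aut_growth heis {heis_a, heis_b, heis_c} (L * n + L) + L)"
    by (rule exI[of _ 5]) (simp add: lower)
qed

end
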